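(* Let $G$ be a connected graph with $n$ vertices. For any $i\in V(G)$, \[ nKf_i(G)-Kf(G)\leq\frac{n-1}{\alpha_i(G)}. \]
   Context: $G$ is a finite simple graph with vertex set $[n]$ and Laplacian matrix $\mathcal{L}_G=D-A$. For a vertex $i$, $\alpha_i(G)=\min\{\mathbf{x}^\top\mathcal{L}_G\mathbf{x} : \mathbf{x}\in\mathbb{R}^n_+,\ \sum_j x_j^2=1,\ x_i=0\}$ (the inverse Perron value of $i$); for connected $G$ this equals the smallest eigenvalue of the principal submatrix $\mathcal{L}_G(i)$ obtained by deleting row and column $i$. The resistance distance $r_{ij}(G)$ is the effective resistance between $i$ and $j$ when every edge is a unit resistor. The resistance centrality of $i$ is $Kf_i(G)=\sum_{j\in V(G)}r_{ij}(G)$ and the Kirchhoff index is $Kf(G)=\sum_{\{i,j\}\subseteq V(G)}r_{ij}(G)$ (sum over unordered pairs). *)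

theory Defs
  imports Complex_Main
begin

definition simple_graph :: "nat \<Rightarrow> (nat \<Rightarrow> nat \<Rightarrow> bool) \<Rightarrow> bool" where
  "simple_graph n E \<longleftrightarrow>
     (\<forall>i j. E i j \<longrightarrow> E j i) \<and> (\<forall>i. \<not> E i i) \<and>
     (\<forall>i j. E i j \<longrightarrow> i \<in> {1..n} \<and> j \<in> {1..n})"

definition connected_graph :: "nat \<Rightarrow> (nat \<Rightarrow> nat \<Rightarrow> bool) \<Rightarrow> bool" where
  "connected_graph n E \<longleftrightarrow> (\<forall>i\<in>{1..n}. \<forall>j\<in>{1..n}. E\<^sup>*\<^sup>* i j)"

definition degree :: "nat \<Rightarrow> (nat \<Rightarrow> nat \<Rightarrow> bool) \<Rightarrow> nat \<Rightarrow> nat" where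
  "degree n E i = card {j\<in>{1..n}. E i j}"

definition laplacian :: "nat \<Rightarrow> (nat \<Rightarrow> nat \<Rightarrow> bool) \<Rightarrow> nat \<Rightarrow> nat \<Rightarrow> real" where
  "laplacian n E i j =
     (if i = j then real (degree n E i) else if E i j then -1 else 0)"

definition lap_form :: "nat \<Rightarrow> (nat \<Rightarrow> nat \<Rightarrow> bool) \<Rightarrow> (nat \<Rightarrow> real) \<Rightarrow> real" where
  "lap_form n E x = (\<Sum>j\<in>{1..n}. \<Sum>k\<in>{1..n}. x j * laplacian n E j k * x k)"

definition inv_perron :: "nat \<Rightarrow> (nat \<Rightarrow> nat \<Rightarrow> bool) \<Rightarrow> nat \<Rightarrow> real" where
  "inv_perron n E i = Inf {lap_form n E x | x.
      (\<forall>j\<in>{1..n}. x j \<ge> 0) \<and> (\<Sum>j\<in>{1..n}. (x j)\<^sup>2) = 1 \<and> x i = 0}"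

text \<open>Effective resistance: inject unit current at i, extract at j; by Kirchhoff's
  laws the node potentials v satisfy L v = e_i - e_j, and r_ij = v_i - v_j.\<close>
definition resistance :: "nat \<Rightarrow> (nat \<Rightarrow> nat \<Rightarrow> bool) \<Rightarrow> nat \<Rightarrow> nat \<Rightarrow> real" where
  "resistance n E i j = (THE d. \<exists>v :: nat \<Rightarrow> real.
      (\<forall>k\<in>{1..n}. (\<Sum>l\<in>{1..n}. laplacian n E k l * v l)
                   = (if k = i then 1 else 0) - (if k = j then 1 else 0))
      \<and> d = v i - v j)"

definition resistance_centrality :: "nat \<Rightarrow> (nat \<Rightarrow> nat \<Rightarrow> bool) \<Rightarrow> nat \<Rightarrow> real" where
  "resistance_centrality n E i = (\<Sum>j\<in>{1..n}. resistance n E i j)"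

text \<open>Kirchhoff index: sum over unordered pairs {i,j}, i.e. pairs with i < j.\<close>
definition kirchhoff_index :: "nat \<Rightarrow> (nat \<Rightarrow> nat \<Rightarrow> bool) \<Rightarrow> real" where
  "kirchhoff_index n E =
     (\<Sum>(i, j)\<in>{(i, j). i \<in> {1..n} \<and> j \<in> {1..n} \<and> i < j}. resistance n E i j)"

end

theory Submission
  imports Defs "Jordan_Normal_Form.Determinant"
begin


definition lapv :: "nat \<Rightarrow> (nat\<Rightarrow>nat\<Rightarrow>bool) \<Rightarrow> (nat\<Rightarrow>real) \<Rightarrow> nat \<Rightarrow> real" where
  "lapv n E x j = (\<Sum>k\<in>{1..n}. laplacian n E j k * x k)"

lemma sg_sym: "simple_graph n E \<Longrightarrow> E a b = E b a"
  unfolding simple_graph_def by blast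

lemma sym_swap:
  assumes "\<And>a b. E a b = E b a"
  shows "(\<Sum>j\<in>A. \<Sum>k\<in>A. if E j k then f j k else (0::real))
       = (\<Sum>j\<in>A. \<Sum>k\<in>A. if E j k then f k j else 0)"
  apply (subst sum.swap)
  using assms by simp

lemma lapv_alt:
  assumes "simple_graph n E" "j \<in> {1..n}"
  shows "lapv n E x j = (\<Sum>k\<in>{1..n}. if E j k then x j - x k else 0)"
proof -
  have nj: "\<not> E j j" using assms(1) unfolding simple_graph_def by blast
  have "lapv n E x j = (\<Sum>k\<in>{1..n}. (if k = j then real (Defs.degree n E j) * x j else 0) + (if E j k then - x k else 0))"
    unfolding lapv_def laplacian_def by (rule sum.cong) (auto simp: nj)
  also have "\<dots> = real (Defs.degree n E j) * x j + (\<Sum>k\<in>{1..n}. if E j k then - x k else 0)"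
    using assms(2) by (simp add: sum.distrib)
  also have "real (Defs.degree n E j) = (\<Sum>k\<in>{1..n}. if E j k then 1 else 0)"
    unfolding Defs.degree_def by (simp add: sum.If_cases Int_def conj_commute)
  also have "(\<Sum>k\<in>{1..n}. if E j k then 1 else 0) * x j = (\<Sum>k\<in>{1..n}. if E j k then x j else 0)"
    by (auto simp add: sum_distrib_right intro!: sum.cong)
  also have "(\<Sum>k\<in>{1..n}. if E j k then x j else 0) + (\<Sum>k\<in>{1..n}. if E j k then - x k else 0)
     = (\<Sum>k\<in>{1..n}. if E j k then x j - x k else 0)"
    by (auto simp add: sum.distrib[symmetric] intro!: sum.cong)
  finally show ?thesis .
qed


lemma lapv_sum_zero:
  assumes "simple_graph n E"
  shows "(\<Sum>j\<in>{1..n}. lapv n E x j) = 0"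
proof -
  have "(\<Sum>j\<in>{1..n}. lapv n E x j) = (\<Sum>j\<in>{1..n}. \<Sum>k\<in>{1..n}. if E j k then x j - x k else 0)"
    using lapv_alt[OF assms] by simp
  also have "\<dots> = (\<Sum>j\<in>{1..n}. \<Sum>k\<in>{1..n}. if E j k then x k - x j else 0)"
    by (rule sym_swap) (rule sg_sym[OF assms])
  also have "\<dots> = - (\<Sum>j\<in>{1..n}. \<Sum>k\<in>{1..n}. if E j k then x j - x k else 0)"
    by (auto simp add: sum_negf[symmetric] intro!: sum.cong)
  finally have "(\<Sum>j\<in>{1..n}. lapv n E x j) = - (\<Sum>j\<in>{1..n}. lapv n E x j)"
    using lapv_alt[OF assms] by simp
  then show ?thesis by simp
qed

lemma lap_form_eq: "lap_form n E x = (\<Sum>j\<in>{1..n}. x j * lapv n E x j)"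
  unfolding lap_form_def lapv_def by (simp add: sum_distrib_left mult.assoc)

lemma lap_form_sq:
  assumes "simple_graph n E"
  shows "2 * lap_form n E x = (\<Sum>j\<in>{1..n}. \<Sum>k\<in>{1..n}. if E j k then (x j - x k)^2 else 0)"
proof -
  have P: "lap_form n E x = (\<Sum>j\<in>{1..n}. \<Sum>k\<in>{1..n}. if E j k then x j * (x j - x k) else 0)"
    unfolding lap_form_eq using lapv_alt[OF assms]
    by (simp add: sum_distrib_left if_distrib cong: if_cong)
  also have "\<dots> = (\<Sum>j\<in>{1..n}. \<Sum>k\<in>{1..n}. if E j k then x k * (x k - x j) else 0)"
    by (rule sym_swap) (rule sg_sym[OF assms])
  finally have Q: "lap_form n E x = \<dots>" .
  have "2 * lap_form n E x = (\<Sum>j\<in>{1..n}. \<Sum>k\<in>{1..n}. (if E j k then x j * (x j - x k) else 0) + (if E j k then x k * (x k - x j) else 0))"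
    using P Q by (simp add: sum.distrib)
  also have "\<dots> = (\<Sum>j\<in>{1..n}. \<Sum>k\<in>{1..n}. if E j k then (x j - x k)^2 else 0)"
    by (intro sum.cong refl) (simp add: power2_eq_square algebra_simps)
  finally show ?thesis .
qed

lemma lap_form_nonneg:
  assumes "simple_graph n E"
  shows "lap_form n E x \<ge> 0"
proof -
  have "0 \<le> (\<Sum>j\<in>{1..n}. \<Sum>k\<in>{1..n}. if E j k then (x j - x k)^2 else (0::real))"
    by (intro sum_nonneg) auto
  then show ?thesis using lap_form_sq[OF assms, of x] by simp
qed

lemma edge_le:
  assumes "simple_graph n E" "E a b"
  shows "(x a - x b)^2 \<le> 2 * lap_form n E x"
proof -
  have ab: "a \<in> {1..n}" "b \<in> {1..n}" using assms unfolding simple_graph_def by blast+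
  have "(x a - x b)^2 = (if E a b then (x a - x b)^2 else 0)" using assms by simp
  also have "\<dots> \<le> (\<Sum>k\<in>{1..n}. if E a k then (x a - x k)^2 else (0::real))"
    by (rule member_le_sum[OF ab(2)]) auto
  also have "\<dots> \<le> (\<Sum>j\<in>{1..n}. \<Sum>k\<in>{1..n}. if E j k then (x j - x k)^2 else (0::real))"
    by (rule member_le_sum[OF ab(1), where f = "\<lambda>j. \<Sum>k\<in>{1..n}. if E j k then (x j - x k)^2 else (0::real)"])
       (auto intro: sum_nonneg)
  finally show ?thesis using lap_form_sq[OF assms(1), of x] by simp
qed

lemma kernel_const:
  assumes "simple_graph n E" "connected_graph n E" "i \<in> {1..n}"
    and "\<forall>k\<in>{1..n}. lapv n E x k = 0"
  shows "\<forall>k\<in>{1..n}. x k = x i"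
proof -
  have "lap_form n E x = 0" unfolding lap_form_eq using assms(4) by simp
  then have edge: "E a b \<Longrightarrow> x a = x b" for a b
    using edge_le[OF assms(1), of a b x] by simp
  have "E\<^sup>*\<^sup>* i k \<Longrightarrow> x k = x i" for k
    by (induction rule: rtranclp_induct) (auto dest: edge)
  then show ?thesis using assms(2,3) unfolding connected_graph_def by blast
qed



lemma shift_sum: "(\<Sum>c<n. f (Suc c)) = (\<Sum>k\<in>{1..n}. (f k :: real))"
proof -
  have "{1..n} = Suc ` {..<n}" by (simp add: image_Suc_lessThan)
  then show ?thesis by (simp add: sum.reindex)
qed

lemma Mv_index:
  assumes "u \<in> carrier_vec n" "a < n"
  shows "(mat n n (\<lambda>(a,c). laplacian n E (Suc a) (Suc c) + 1) *\<^sub>v u) $ a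
     = lapv n E (\<lambda>k. u $ (k - 1)) (Suc a) + (\<Sum>k\<in>{1..n}. u $ (k - 1))"
proof -
  have "(mat n n (\<lambda>(a,c). laplacian n E (Suc a) (Suc c) + 1) *\<^sub>v u) $ a
     = (\<Sum>c<n. (laplacian n E (Suc a) (Suc c) + 1) * u $ c)"
    using assms by (simp add: scalar_prod_def lessThan_atLeast0)
  also have "\<dots> = (\<Sum>k\<in>{1..n}. (laplacian n E (Suc a) k + 1) * u $ (k - 1))"
    using shift_sum[where f = "\<lambda>k. (laplacian n E (Suc a) k + 1) * u $ (k - 1)"] by simp
  also have "\<dots> = lapv n E (\<lambda>k. u $ (k - 1)) (Suc a) + (\<Sum>k\<in>{1..n}. u $ (k - 1))"
    unfolding lapv_def by (simp add: algebra_simps sum.distrib)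
  finally show ?thesis .
qed

lemma exists_sol:
  assumes sg: "simple_graph n E" and conn: "connected_graph n E" and n1: "n \<ge> 1"
    and bsum: "(\<Sum>k\<in>{1..n}. b k) = 0"
  shows "\<exists>v. \<forall>k\<in>{1..n}. lapv n E v k = b k"
proof -
  define M where "M = mat n n (\<lambda>(a,c). laplacian n E (Suc a) (Suc c) + (1::real))"
  have M: "M \<in> carrier_mat n n" unfolding M_def by simp
  have key: "\<And>(u::real vec) k. u \<in> carrier_vec n \<Longrightarrow> k \<in> {1..n} \<Longrightarrow>
      (M *\<^sub>v u) $ (k - 1) = lapv n E (\<lambda>k. u $ (k - 1)) k + (\<Sum>k\<in>{1..n}. u $ (k - 1))"
  proof -
    fix u :: "real vec" and k assume u: "u \<in> carrier_vec n" and k: "k \<in> {1..n}"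
    have kn: "k - 1 < n" and sk: "Suc (k - 1) = k" using k by auto
    have "(M *\<^sub>v u) $ (k - 1) = lapv n E (\<lambda>k. u $ (k - 1)) (Suc (k - 1)) + (\<Sum>k\<in>{1..n}. u $ (k - 1))"
      unfolding M_def by (rule Mv_index[OF u kn])
    then show "(M *\<^sub>v u) $ (k - 1) = lapv n E (\<lambda>k. u $ (k - 1)) k + (\<Sum>k\<in>{1..n}. u $ (k - 1))"
      using sk by simp
  qed
  have sumlem: "\<And>x c b'. (\<forall>k\<in>{1..n}. lapv n E x k + c = b' k) \<Longrightarrow> (\<Sum>k\<in>{1..n}. b' k) = 0 \<Longrightarrow> c = 0"
  proof -
    fix x c b' assume h: "\<forall>k\<in>{1..n}. lapv n E x k + (c::real) = b' k" and s0: "(\<Sum>k\<in>{1..n}. b' k) = (0::real)"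
    have "(\<Sum>k\<in>{1..n}. lapv n E x k + c) = (\<Sum>k\<in>{1..n}. b' k)" using h by simp
    then have "real n * c = 0" using lapv_sum_zero[OF sg] s0 by (simp add: sum.distrib)
    then show "c = 0" using n1 by simp
  qed
  have "det M \<noteq> 0"
  proof
    assume "det M = 0"
    then obtain u where u: "u \<in> carrier_vec n" "u \<noteq> 0\<^sub>v n" "M *\<^sub>v u = 0\<^sub>v n"
      using det_0_iff_vec_prod_zero_field[OF M] by blast
    define x where "x = (\<lambda>k. u $ (k - 1))"
    have h0: "\<forall>k\<in>{1..n}. lapv n E x k + (\<Sum>k\<in>{1..n}. x k) = (\<lambda>_. 0) k"
    proof
      fix k assume k: "k \<in> {1..n}"
      have kn: "k - 1 < n" using k by auto
      have "(M *\<^sub>v u) $ (k - 1) = 0" unfolding u(3) using kn by simp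
      then show "lapv n E x k + (\<Sum>k\<in>{1..n}. x k) = (\<lambda>_. 0) k" using key[OF u(1) k] unfolding x_def by simp
    qed
    have S0: "(\<Sum>k\<in>{1..n}. x k) = 0"
      by (rule sumlem[OF h0]) simp
    have l0: "\<forall>k\<in>{1..n}. lapv n E x k = 0" using h0 S0 by simp
    have one: "1 \<in> {1..n}" using n1 by simp
    have c: "\<forall>k\<in>{1..n}. x k = x 1" by (rule kernel_const[OF sg conn one l0])
    then have "(\<Sum>k\<in>{1..n}. x k) = (\<Sum>k\<in>{1..n}. x 1)" by (intro sum.cong refl) blast
    then have "(\<Sum>k\<in>{1..n}. x k) = real n * x 1" by simp
    with S0 n1 have "x 1 = 0" by simp
    with c have "\<forall>k\<in>{1..n}. x k = 0" by metis
    then have "u = 0\<^sub>v n"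
    proof (intro eq_vecI)
      fix a assume "\<forall>k\<in>{1..n}. x k = 0" "a < dim_vec (0\<^sub>v n :: real vec)"
      then show "u $ a = 0\<^sub>v n $ a" using x_def[THEN fun_cong, of "Suc a"] by auto
    qed (use u in auto)
    with u(2) show False by simp
  qed
  from det_non_zero_imp_unit[OF M this, of "()"]
  have "\<exists>B\<in>carrier_mat n n. B * M = 1\<^sub>m n \<and> M * B = 1\<^sub>m n"
    by (simp add: Units_def ring_mat_def)
  then obtain B where B: "B \<in> carrier_mat n n" "M * B = 1\<^sub>m n"
    by blast
  define bv where "bv = vec n (\<lambda>a. b (Suc a))"
  define u where "u = B *\<^sub>v bv"
  have u: "u \<in> carrier_vec n" unfolding u_def bv_def using B by simp
  have Mu: "M *\<^sub>v u = bv" unfolding u_def using B M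
    by (simp add: assoc_mult_mat_vec[symmetric] bv_def)
  define x where "x = (\<lambda>k. u $ (k - 1))"
  have h1: "\<forall>k\<in>{1..n}. lapv n E x k + (\<Sum>k\<in>{1..n}. x k) = b k"
  proof
    fix k assume k: "k \<in> {1..n}"
    have kn: "k - 1 < n" and sk: "Suc (k - 1) = k" using k by auto
    have "(M *\<^sub>v u) $ (k - 1) = b k" unfolding Mu bv_def using kn sk by simp
    then show "lapv n E x k + (\<Sum>k\<in>{1..n}. x k) = b k" using key[OF u k] unfolding x_def by simp
  qed
  have "(\<Sum>k\<in>{1..n}. x k) = 0" by (rule sumlem[OF h1 bsum])
  then show ?thesis using h1 by auto
qed



lemma lapv_comb:
  assumes "simple_graph n E" "j \<in> {1..n}"
  shows "lapv n E (\<lambda>k. c + a * x k + b * y k) j = a * lapv n E x j + b * lapv n E y j"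
  using assms
  by (simp add: lapv_alt sum_distrib_left sum.distrib[symmetric] if_distrib algebra_simps cong: if_cong)

lemma lapv_sumfam:
  "lapv n E (\<lambda>k. \<Sum>b\<in>B. g b k) j = (\<Sum>b\<in>B. lapv n E (g b) j)"
  unfolding lapv_def by (simp add: sum_distrib_left) (rule sum.swap)

lemma cs_ineq:
  fixes f :: "'a \<Rightarrow> real"
  assumes "finite A"
  shows "(\<Sum>a\<in>A. f a)^2 \<le> real (card A) * (\<Sum>a\<in>A. (f a)^2)"
proof -
  have "0 \<le> (\<Sum>a\<in>A. \<Sum>b\<in>A. (f a - f b)^2)" by (intro sum_nonneg) auto
  also have "(\<Sum>a\<in>A. \<Sum>b\<in>A. (f a - f b)^2) = (\<Sum>a\<in>A. \<Sum>b\<in>A. (f a)^2 + (f b)^2 - 2 * f a * f b)"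
    by (intro sum.cong refl) (simp add: power2_eq_square algebra_simps)
  also have "\<dots> = (\<Sum>a\<in>A. \<Sum>b\<in>A. (f a)^2) + (\<Sum>a\<in>A. \<Sum>b\<in>A. (f b)^2) - (\<Sum>a\<in>A. \<Sum>b\<in>A. 2 * f a * f b)"
    by (simp add: sum.distrib sum_subtractf)
  also have "(\<Sum>a\<in>A. \<Sum>b\<in>A. 2 * f a * f b) = (\<Sum>a\<in>A. 2 * f a) * (\<Sum>b\<in>A. f b)"
    by (simp add: sum_product)
  also have "(\<Sum>a\<in>A. 2 * f a) = 2 * (\<Sum>a\<in>A. f a)" by (simp add: sum_distrib_left)
  also have "(\<Sum>a\<in>A. \<Sum>b\<in>A. (f b)^2) = real (card A) * (\<Sum>a\<in>A. (f a)^2)" by simp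
  also have "(\<Sum>a\<in>A. \<Sum>b\<in>A. (f a)^2) = real (card A) * (\<Sum>a\<in>A. (f a)^2)" by (simp add: sum_distrib_left mult.commute)
  finally show ?thesis by (simp add: power2_eq_square)
qed

lemma pair_sum:
  fixes f :: "nat \<Rightarrow> nat \<Rightarrow> real"
  assumes A: "finite A" and sym: "\<And>a b. f a b = f b a" and diag: "\<And>a. f a a = 0"
  shows "(\<Sum>a\<in>A. \<Sum>b\<in>A. f a b) = 2 * (\<Sum>(a,b)\<in>{(a,b). a\<in>A \<and> b\<in>A \<and> a<b}. f a b)"
proof -
  define P where "P = {(a,b). a\<in>A \<and> b\<in>A \<and> a<b}"
  define P' where "P' = {(a,b). a\<in>A \<and> b\<in>A \<and> b<a}"
  define D where "D = {(a,b). a\<in>A \<and> b\<in>A \<and> a=b}"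
  have fin: "finite P" "finite P'" "finite D"
    by (rule finite_subset[OF _ finite_cartesian_product[OF A A]], auto simp: P_def P'_def D_def)+
  have AA: "A \<times> A = (P \<union> P') \<union> D" unfolding P_def P'_def D_def by auto
  have "(\<Sum>a\<in>A. \<Sum>b\<in>A. f a b) = (\<Sum>(a,b)\<in>A \<times> A. f a b)"
    by (simp add: sum.cartesian_product)
  also have "\<dots> = (\<Sum>(a,b)\<in>P. f a b) + (\<Sum>(a,b)\<in>P'. f a b) + (\<Sum>(a,b)\<in>D. f a b)"
    unfolding AA using fin
    by (subst sum.union_disjoint, auto simp: P_def P'_def D_def)+
  also have "(\<Sum>(a,b)\<in>D. f a b) = 0" by (intro sum.neutral) (auto simp: D_def diag)
  also have "P' = prod.swap ` P" unfolding P_def P'_def by auto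
  also have "(\<Sum>(a,b)\<in>prod.swap ` P. f a b) = (\<Sum>(a,b)\<in>P. f a b)"
    by (subst sum.reindex) (auto simp: sym intro: sum.cong)
  finally show ?thesis unfolding P_def by simp
qed



lemma lapv_diff: "lapv n E (\<lambda>k. x k - y k) j = lapv n E x j - lapv n E y j"
  unfolding lapv_def by (simp add: sum_subtractf algebra_simps)

lemma lapv_scale: "lapv n E (\<lambda>k. a * x k) j = a * lapv n E x j"
  unfolding lapv_def by (simp add: sum_distrib_left algebra_simps)

lemma lapv_shift:
  assumes "simple_graph n E" "j \<in> {1..n}"
  shows "lapv n E (\<lambda>k. x k - c) j = lapv n E x j"
  using assms by (simp add: lapv_alt cong: if_cong)

lemma green_exists:
  assumes sg: "simple_graph n E" and conn: "connected_graph n E" and j: "j \<in> {1..n}"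
  shows "\<exists>g. (\<forall>k\<in>{1..n}. lapv n E g k = (if k = j then 1 else 0) - 1 / real n)
            \<and> (\<Sum>k\<in>{1..n}. g k) = 0"
proof -
  have n1: "n \<ge> 1" using j by simp
  have "(\<Sum>k\<in>{1..n}. (if k = j then 1 else 0) - 1 / real n) = 0"
    using j n1 by (simp add: sum_subtractf)
  from exists_sol[OF sg conn n1 this] obtain v where
    v: "\<forall>k\<in>{1..n}. lapv n E v k = (if k = j then 1 else 0) - 1 / real n" by blast
  define c where "c = (\<Sum>k\<in>{1..n}. v k) / real n"
  define g where "g = (\<lambda>k. v k - c)"
  have "\<forall>k\<in>{1..n}. lapv n E g k = (if k = j then 1 else 0) - 1 / real n"
    unfolding g_def using lapv_shift[OF sg] v by simp
  moreover have "(\<Sum>k\<in>{1..n}. g k) = 0"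
    unfolding g_def c_def using n1 by (simp add: sum_subtractf)
  ultimately show ?thesis by blast
qed

lemma resistance_eq:
  assumes sg: "simple_graph n E" and conn: "connected_graph n E"
    and a: "a \<in> {1..n}" and b: "b \<in> {1..n}"
    and v: "\<forall>k\<in>{1..n}. lapv n E v k = (if k = a then 1 else 0) - (if k = b then 1 else 0)"
  shows "resistance n E a b = v a - v b"
  unfolding resistance_def
proof (rule the_equality)
  show "\<exists>v'. (\<forall>k\<in>{1..n}. (\<Sum>l\<in>{1..n}. laplacian n E k l * v' l) =
            (if k = a then 1 else 0) - (if k = b then 1 else 0)) \<and> v a - v b = v' a - v' b"
    using v unfolding lapv_def by blast
next
  fix d assume "\<exists>v'. (\<forall>k\<in>{1..n}. (\<Sum>l\<in>{1..n}. laplacian n E k l * v' l) =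
            (if k = a then 1 else 0) - (if k = b then 1 else 0)) \<and> d = v' a - v' b"
  then obtain v' where v': "\<forall>k\<in>{1..n}. lapv n E v' k = (if k = a then 1 else 0) - (if k = b then 1 else 0)"
    and d: "d = v' a - v' b" unfolding lapv_def by blast
  define z where "z = (\<lambda>k. v' k - v k)"
  have "\<forall>k\<in>{1..n}. lapv n E z k = 0"
    unfolding z_def lapv_diff using v v' by simp
  from kernel_const[OF sg conn a this] b have "z b = z a" by blast
  then show "d = v a - v b" unfolding d z_def by simp
qed

lemma path_bound:
  assumes sg: "simple_graph n E" and p: "E\<^sup>*\<^sup>* i k"
  shows "\<exists>m::nat. \<forall>x. x i = 0 \<longrightarrow> \<bar>x k\<bar> \<le> real m * sqrt (2 * lap_form n E x)"
  using p
proof (induction rule: rtranclp_induct)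
  case base
  then show ?case by (intro exI[of _ 0]) simp
next
  case (step k k')
  then obtain m where m: "\<forall>x. x i = 0 \<longrightarrow> \<bar>x k\<bar> \<le> real m * sqrt (2 * lap_form n E x)" by blast
  have "\<forall>x. x i = 0 \<longrightarrow> \<bar>x k'\<bar> \<le> real (Suc m) * sqrt (2 * lap_form n E x)"
  proof (intro allI impI)
    fix x :: "nat \<Rightarrow> real" assume x: "x i = 0"
    have "sqrt ((x k - x k')^2) \<le> sqrt (2 * lap_form n E x)"
      by (rule real_sqrt_le_mono[OF edge_le[OF sg step(2)]])
    then have e: "\<bar>x k - x k'\<bar> \<le> sqrt (2 * lap_form n E x)" by simp
    have "\<bar>x k'\<bar> \<le> \<bar>x k\<bar> + \<bar>x k - x k'\<bar>" by linarith
    also have "\<dots> \<le> real m * sqrt (2 * lap_form n E x) + sqrt (2 * lap_form n E x)"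
      using m x e by (meson add_mono)
    finally show "\<bar>x k'\<bar> \<le> real (Suc m) * sqrt (2 * lap_form n E x)" by (simp add: algebra_simps)
  qed
  then show ?case by blast
qed



lemma alpha_pos:
  assumes sg: "simple_graph n E" and conn: "connected_graph n E" and i: "i \<in> {1..n}" and n2: "n \<ge> 2"
  shows "inv_perron n E i > 0"
proof -
  have "\<forall>k\<in>{1..n}. \<exists>m::nat. \<forall>x. x i = 0 \<longrightarrow> \<bar>x k\<bar> \<le> real m * sqrt (2 * lap_form n E x)"
    using path_bound[OF sg] conn i unfolding connected_graph_def by blast
  from bchoice[OF this] obtain m where
    m: "\<forall>k\<in>{1..n}. \<forall>x. x i = 0 \<longrightarrow> \<bar>x k\<bar> \<le> real (m k) * sqrt (2 * lap_form n E x)" by blast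
  define M where "M = (\<Sum>k\<in>{1..n}. m k)"
  define K where "K = 2 * real n * (real M)^2"
  define S where "S = {lap_form n E x | x.
      (\<forall>j\<in>{1..n}. x j \<ge> 0) \<and> (\<Sum>j\<in>{1..n}. (x j)\<^sup>2) = 1 \<and> x i = 0}"
  have K0: "K \<ge> 0" unfolding K_def by simp
  have lb: "1 / (K + 1) \<le> y" if y: "y \<in> S" for y
  proof -
    obtain x where x: "\<forall>j\<in>{1..n}. x j \<ge> 0" "(\<Sum>j\<in>{1..n}. (x j)\<^sup>2) = 1" "x i = 0"
      and yx: "y = lap_form n E x" using y unfolding S_def by blast
    define t where "t = real M * sqrt (2 * lap_form n E x)"
    have lf0: "lap_form n E x \<ge> 0" by (rule lap_form_nonneg[OF sg])
    have t0: "t \<ge> 0" unfolding t_def using lf0 by simp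
    have t2: "t^2 = (real M)^2 * (2 * lap_form n E x)"
      unfolding t_def using lf0 by (simp add: power_mult_distrib)
    have xk: "(x k)^2 \<le> t^2" if k: "k \<in> {1..n}" for k
    proof -
      have "m k \<le> M" unfolding M_def by (rule member_le_sum[OF k]) auto
      then have "real (m k) * sqrt (2 * lap_form n E x) \<le> t"
        unfolding t_def using lf0 by (intro mult_right_mono) auto
      with m k x(3) have "\<bar>x k\<bar> \<le> t" by force
      then have "\<bar>x k\<bar>^2 \<le> t^2" by (intro power_mono) auto
      then show ?thesis by simp
    qed
    have "1 = (\<Sum>j\<in>{1..n}. (x j)\<^sup>2)" using x(2) by simp
    also have "\<dots> \<le> (\<Sum>j\<in>{1..n}. t^2)" by (intro sum_mono xk)
    also have "\<dots> = K * lap_form n E x" unfolding t2 K_def by simp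
    finally have "1 \<le> K * lap_form n E x" .
    then have "1 \<le> (K + 1) * lap_form n E x" using lf0 by (simp add: algebra_simps)
    then show ?thesis unfolding yx using K0 by (simp add: divide_le_eq mult.commute)
  qed
  define k1 where "k1 = (if i = 1 then 2 else 1::nat)"
  have k1: "k1 \<in> {1..n}" "k1 \<noteq> i" unfolding k1_def using n2 i by auto
  define x1 where "x1 = (\<lambda>j. if j = k1 then 1 else (0::real))"
  have "(\<Sum>j\<in>{1..n}. (x1 j)\<^sup>2) = (\<Sum>j\<in>{1..n}. if j = k1 then 1 else 0)"
    unfolding x1_def by (intro sum.cong refl) auto
  also have "\<dots> = 1" using k1 by simp
  finally have "(\<Sum>j\<in>{1..n}. (x1 j)\<^sup>2) = 1" .
  then have "lap_form n E x1 \<in> S" unfolding S_def x1_def using k1 by auto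
  then have ne: "S \<noteq> {}" by blast
  have "1 / (K + 1) \<le> Inf S" by (rule cInf_greatest[OF ne lb])
  moreover have "0 < 1 / (K + 1)" using K0 by simp
  ultimately show ?thesis unfolding inv_perron_def S_def by linarith
qed



lemma lap_form_scale: "lap_form n E (\<lambda>k. c * x k) = c^2 * lap_form n E x"
  unfolding lap_form_def by (simp add: sum_distrib_left power2_eq_square algebra_simps)

theorem theorem4p2:
  fixes n :: nat and E :: "nat \<Rightarrow> nat \<Rightarrow> bool" and i :: nat
  assumes "simple_graph n E" and "connected_graph n E" and "i \<in> {1..n}"
  shows "real n * resistance_centrality n E i - kirchhoff_index n E
           \<le> (real n - 1) / inv_perron n E i"
proof -
  note sg = assms(1) and conn = assms(2) and i = assms(3)
  have n1: "n \<ge> 1" using i by simp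
  have "\<forall>j\<in>{1..n}. \<exists>g. (\<forall>k\<in>{1..n}. lapv n E g k = (if k = j then 1 else 0) - 1 / real n)
            \<and> (\<Sum>k\<in>{1..n}. g k) = 0"
    using green_exists[OF sg conn] by blast
  from bchoice[OF this] obtain g where
    g: "\<forall>j\<in>{1..n}. (\<forall>k\<in>{1..n}. lapv n E (g j) k = (if k = j then 1 else 0) - 1 / real n)
            \<and> (\<Sum>k\<in>{1..n}. g j k) = 0" by blast
  have gl: "\<And>j k. j \<in> {1..n} \<Longrightarrow> k \<in> {1..n} \<Longrightarrow> lapv n E (g j) k = (if k = j then 1 else 0) - 1 / real n"
    using g by blast
  have gs: "\<And>j. j \<in> {1..n} \<Longrightarrow> (\<Sum>k\<in>{1..n}. g j k) = 0" using g by blast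
  define R where "R = (\<lambda>a b. g a a - g a b - g b a + g b b)"
  have res: "resistance n E a b = R a b" if a: "a \<in> {1..n}" and b: "b \<in> {1..n}" for a b
  proof -
    have "\<forall>k\<in>{1..n}. lapv n E (\<lambda>k. g a k - g b k) k = (if k = a then 1 else 0) - (if k = b then 1 else 0)"
      using gl[OF a] gl[OF b] unfolding lapv_diff by simp
    from resistance_eq[OF sg conn a b this] show ?thesis unfolding R_def by simp
  qed
  define s where "s = (\<lambda>k. \<Sum>b\<in>{1..n}. g b k)"
  have cs: "s k = 0" if k: "k \<in> {1..n}" for k
  proof -
    have "lapv n E s k = 0" if k: "k \<in> {1..n}" for k
    proof -
      have "lapv n E s k = (\<Sum>b\<in>{1..n}. lapv n E (g b) k)" unfolding s_def by (rule lapv_sumfam)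
      also have "\<dots> = (\<Sum>b\<in>{1..n}. (if k = b then 1 else 0) - 1 / real n)"
        using gl k by (intro sum.cong refl) auto
      also have "\<dots> = 0" using k n1 by (simp add: sum_subtractf)
      finally show ?thesis .
    qed
    then have c: "\<forall>k\<in>{1..n}. s k = s i" using kernel_const[OF sg conn i] by blast
    have "(\<Sum>k\<in>{1..n}. s k) = (\<Sum>b\<in>{1..n}. \<Sum>k\<in>{1..n}. g b k)" unfolding s_def by (rule sum.swap)
    also have "\<dots> = 0" using gs by simp
    finally have "(\<Sum>k\<in>{1..n}. s k) = 0" .
    moreover have "(\<Sum>k\<in>{1..n}. s k) = (\<Sum>k\<in>{1..n}. s i)" using c by (intro sum.cong refl) blast
    ultimately have "s i = 0" using n1 by simp
    with c k show ?thesis by metis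
  qed
  define T where "T = (\<Sum>b\<in>{1..n}. g b b)"
  have rowR: "(\<Sum>b\<in>{1..n}. R a b) = real n * g a a + T" if a: "a \<in> {1..n}" for a
  proof -
    have "(\<Sum>b\<in>{1..n}. R a b) = real n * g a a - (\<Sum>b\<in>{1..n}. g a b) - s a + T"
      unfolding R_def s_def T_def by (simp add: sum.distrib sum_subtractf)
    then show ?thesis using gs[OF a] cs[OF a] by simp
  qed
  have Kfi: "resistance_centrality n E i = real n * g i i + T"
    unfolding resistance_centrality_def using res[OF i] rowR[OF i] by simp
  have Kf: "kirchhoff_index n E = real n * T"
  proof -
    have "kirchhoff_index n E = (\<Sum>(a,b)\<in>{(a,b). a \<in> {1..n} \<and> b \<in> {1..n} \<and> a < b}. R a b)"
      unfolding kirchhoff_index_def by (intro sum.cong refl) (auto simp: res)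
    moreover have "(\<Sum>a\<in>{1..n}. \<Sum>b\<in>{1..n}. R a b) = 2 * (\<Sum>(a,b)\<in>{(a,b). a \<in> {1..n} \<and> b \<in> {1..n} \<and> a < b}. R a b)"
      by (rule pair_sum) (auto simp: R_def)
    moreover have "(\<Sum>a\<in>{1..n}. \<Sum>b\<in>{1..n}. R a b) = (\<Sum>a\<in>{1..n}. real n * g a a + T)"
      using rowR by (intro sum.cong refl) auto
    moreover have "(\<Sum>a\<in>{1..n}. real n * g a a + T) = 2 * (real n * T)"
      unfolding T_def by (simp add: sum.distrib sum_distrib_left)
    ultimately show ?thesis by simp
  qed
  have diff: "real n * resistance_centrality n E i - kirchhoff_index n E = (real n)^2 * g i i"
    unfolding Kfi Kf by (simp add: power2_eq_square algebra_simps)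
  define w where "w = (\<lambda>k. (- real n) * g i k - (- real n) * g i i)"
  have wi: "w i = 0" unfolding w_def by simp
  have lw: "lapv n E w k = (if k = i then 1 - real n else 1)" if k: "k \<in> {1..n}" for k
  proof -
    have "lapv n E w k = (- real n) * lapv n E (g i) k"
      unfolding w_def lapv_shift[OF sg k] lapv_scale ..
    then show ?thesis using gl[OF i k] n1 by (cases "k = i") (simp_all add: field_simps)
  qed
  define Q where "Q = (\<Sum>k\<in>{1..n}. w k)"
  have Qeq: "Q = (real n)^2 * g i i"
    unfolding Q_def w_def using gs[OF i] by (simp add: sum_subtractf sum_distrib_left[symmetric] power2_eq_square)
  show ?thesis
  proof (cases "n = 1")
    case True
    then have "Q = 0" unfolding Q_def using i wi by simp
    then show ?thesis using diff Qeq True by simp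
  next
    case False
    then have n2: "n \<ge> 2" using n1 by simp
    have lfw: "lap_form n E w = Q"
      unfolding lap_form_eq Q_def using lw wi by (intro sum.cong refl) auto
    have wnn: "\<forall>k\<in>{1..n}. w k \<ge> 0"
    proof -
      define m where "m = Min (w ` {1..n})"
      have "m \<in> w ` {1..n}" unfolding m_def using n1 by (intro Min_in) auto
      then obtain k0 where k0: "k0 \<in> {1..n}" "w k0 = m" by blast
      have mle: "\<forall>k\<in>{1..n}. m \<le> w k" unfolding m_def by auto
      have "m \<ge> 0"
      proof (rule ccontr)
        assume "\<not> m \<ge> 0"
        then have "k0 \<noteq> i" using k0 wi by auto
        then have "lapv n E w k0 = 1" using lw[OF k0(1)] by simp
        moreover have "lapv n E w k0 \<le> 0"
          unfolding lapv_alt[OF sg k0(1)] using mle k0 by (intro sum_nonpos) auto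
        ultimately show False by simp
      qed
      then show ?thesis using mle by fastforce
    qed
    have Q0: "Q \<ge> 0" unfolding Q_def using wnn by (intro sum_nonneg) auto
    define s2 where "s2 = (\<Sum>k\<in>{1..n}. (w k)^2)"
    define k1 where "k1 = (if i = 1 then 2 else 1::nat)"
    have k1: "k1 \<in> {1..n}" "k1 \<noteq> i" unfolding k1_def using n2 i by auto
    have "w k1 \<noteq> 0"
    proof
      assume "w k1 = 0"
      have "lapv n E w k1 = 1" using lw[OF k1(1)] k1(2) by simp
      moreover have "lapv n E w k1 \<le> 0"
        unfolding lapv_alt[OF sg k1(1)] using wnn \<open>w k1 = 0\<close> by (intro sum_nonpos) auto
      ultimately show False by simp
    qed
    then have "0 < (w k1)^2" by simp
    also have "(w k1)^2 \<le> s2" unfolding s2_def by (rule member_le_sum[OF k1(1)]) auto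
    finally have s2p: "s2 > 0" .
    have ap: "inv_perron n E i > 0" by (rule alpha_pos[OF sg conn i n2])
    define x0 where "x0 = (\<lambda>k. (1 / sqrt s2) * w k)"
    have "(\<Sum>j\<in>{1..n}. (x0 j)\<^sup>2) = (\<Sum>j\<in>{1..n}. (w j)^2 / s2)"
      unfolding x0_def using s2p by (intro sum.cong refl) (simp add: power_mult_distrib power_divide)
    also have "\<dots> = 1" using s2p unfolding s2_def by (simp add: sum_divide_distrib[symmetric])
    finally have x0n: "(\<Sum>j\<in>{1..n}. (x0 j)\<^sup>2) = 1" .
    have "lap_form n E x0 \<in> {lap_form n E x | x.
      (\<forall>j\<in>{1..n}. x j \<ge> 0) \<and> (\<Sum>j\<in>{1..n}. (x j)\<^sup>2) = 1 \<and> x i = 0}"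
    proof -
      have "\<forall>j\<in>{1..n}. x0 j \<ge> 0" using wnn s2p unfolding x0_def by simp
      moreover have "x0 i = 0" using wi unfolding x0_def by simp
      ultimately show ?thesis using x0n by blast
    qed
    moreover have "bdd_below {lap_form n E x | x.
      (\<forall>j\<in>{1..n}. x j \<ge> 0) \<and> (\<Sum>j\<in>{1..n}. (x j)\<^sup>2) = 1 \<and> x i = 0}"
      by (rule bdd_belowI[of _ 0]) (auto intro: lap_form_nonneg[OF sg])
    ultimately have "inv_perron n E i \<le> lap_form n E x0"
      unfolding inv_perron_def by (rule cInf_lower)
    also have "lap_form n E x0 = Q / s2"
      unfolding x0_def lap_form_scale lfw using s2p by (simp add: power_divide)
    finally have aQ: "inv_perron n E i \<le> Q / s2" .
    have Qd: "Q = (\<Sum>k\<in>{1..n} - {i}. w k)" unfolding Q_def using i wi by (simp add: sum_diff1)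
    have sd: "s2 = (\<Sum>k\<in>{1..n} - {i}. (w k)^2)" unfolding s2_def using i wi by (simp add: sum_diff1)
    have cd: "card ({1..n} - {i}) = n - 1" using i by simp
    have CS: "Q^2 \<le> (real n - 1) * s2"
      using cs_ineq[of "{1..n} - {i}" w] unfolding Qd sd cd using n1 by (simp add: of_nat_diff)
    have "Q * inv_perron n E i \<le> Q * (Q / s2)" using aQ Q0 by (rule mult_left_mono)
    also have "\<dots> = Q^2 / s2" by (simp add: power2_eq_square)
    also have "\<dots> \<le> real n - 1" using CS s2p by (simp add: divide_le_eq)
    finally have "Q * inv_perron n E i \<le> real n - 1" .
    then have "Q \<le> (real n - 1) / inv_perron n E i" using ap by (simp add: le_divide_eq)
    then show ?thesis using diff Qeq by simp
  qed
qed

end
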